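(* Let $x,u,v\in\mathbb{R}^N$ with $|u|=|v|=r>0$. Assume that $B_r(x+u)\cap B_r(-x-v)=\emptyset$ and $B_r(x-u)\cap B_r(-x+v)=\emptyset$. Then $|u-v|\le 2|x|$.
   Context: $B_r(y)$ denotes the open Euclidean ball of radius $r$ centered at $y$. *)

theory Defs
  imports "HOL-Analysis.Analysis"
begin

end

theory Submission
  imports Defs
begin

lemma disj_ball_dist:
  fixes a b :: "'a::real_normed_vector"
  assumes "ball a r \<inter> ball b r = {}" "r > 0"
  shows "norm (a - b) \<ge> 2 * r"
proof (rule ccontr)
  assume h: "\<not> ?thesis"
  let ?m = "(1/2) *\<^sub>R (a + b)"
  have "norm (a - ?m) = norm (a - b) / 2"
  proof -
    have "a - ?m = (1/2) *\<^sub>R (a - b)" by (simp add: algebra_simps flip: scaleR_add_left)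
    then show ?thesis by simp
  qed
  moreover have "norm (b - ?m) = norm (a - b) / 2"
  proof -
    have "b - ?m = (1/2) *\<^sub>R (b - a)" by (simp add: algebra_simps flip: scaleR_add_left)
    then show ?thesis by (simp add: norm_minus_commute)
  qed
  ultimately have "?m \<in> ball a r" "?m \<in> ball b r" using h by (auto simp: dist_norm)
  then show False using assms(1) by blast
qed

theorem lemma2p1:
  fixes x u v :: "real ^ 'n" and r :: real
  assumes "r > 0" and "norm u = r" and "norm v = r"
    and "ball (x + u) r \<inter> ball (- x - v) r = {}"
    and "ball (x - u) r \<inter> ball (- x + v) r = {}"
  shows "norm (u - v) \<le> 2 * norm x"
proof -
  define y where "y = 2 *\<^sub>R x"
  define s where "s = u + v"
  define w where "w = u - v"
  have "norm (y + s) \<ge> 2 * r"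
    using disj_ball_dist[OF assms(4) assms(1)] by (simp add: y_def s_def algebra_simps scaleR_2)
  then have 1: "(y + s) \<bullet> (y + s) \<ge> 4 * r^2"
  proof -
    have "(2*r)^2 \<le> (norm (y + s))^2" by (rule power_mono) (use assms(1) \<open>norm (y + s) \<ge> 2 * r\<close> in auto)
    then show ?thesis by (simp add: power2_norm_eq_inner power_mult_distrib)
  qed
  have "norm (y - s) \<ge> 2 * r"
    using disj_ball_dist[OF assms(5) assms(1)] by (simp add: y_def s_def algebra_simps scaleR_2)
  then have 2: "(y - s) \<bullet> (y - s) \<ge> 4 * r^2"
  proof -
    have "(2*r)^2 \<le> (norm (y - s))^2" by (rule power_mono) (use assms(1) \<open>norm (y - s) \<ge> 2 * r\<close> in auto)
    then show ?thesis by (simp add: power2_norm_eq_inner power_mult_distrib)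
  qed
  have uu: "u \<bullet> u = r^2" "v \<bullet> v = r^2" using assms(2,3) by (auto simp: power2_norm_eq_inner[symmetric])
  have e1: "(y + s) \<bullet> (y + s) = y \<bullet> y + 2 * (y \<bullet> s) + s \<bullet> s" by (simp add: algebra_simps inner_commute)
  have e2: "(y - s) \<bullet> (y - s) = y \<bullet> y - 2 * (y \<bullet> s) + s \<bullet> s" by (simp add: algebra_simps inner_commute)
  have e3: "s \<bullet> s + w \<bullet> w = 2 * (u \<bullet> u) + 2 * (v \<bullet> v)"
    by (simp add: s_def w_def algebra_simps inner_commute)
  have "w \<bullet> w \<le> y \<bullet> y" using 1 2 e1 e2 e3 uu by linarith
  then have "norm w \<le> norm y" by (simp add: norm_eq_sqrt_inner)
  then show ?thesis by (simp add: w_def y_def)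
qed

end
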